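(* Let $G$ be a cubic graph and let $M$ be a perfect matching cut of $G$. Let $C_1, C_2$ be two vertex-disjoint induced $4$-vertex cycles of $G$ such that there is an edge of $G$ between $V(C_1)$ and $V(C_2)$. Then $E(C_1) \cap M \neq \emptyset$ if and only if $E(C_2) \cap M \neq \emptyset$.
   Context: All graphs are finite, simple and undirected; a graph is cubic if every vertex has exactly three neighbours. A cutset of $G$ is a set $M \subseteq E(G)$ for which there is a bipartition $X \uplus Y = V(G)$ into two nonempty sets such that $M$ is exactly the set of edges with one endpoint in $X$ and one in $Y$. A perfect matching cut is a perfect matching (a set of edges covering every vertex exactly once) that is also a cutset. For a subgraph $C$, $E(C)$ and $V(C)$ denote its edge set and vertex set. *)

theory Defs
  imports Main
begin

definition simple_graph :: "'a set \<Rightarrow> 'a set set \<Rightarrow> bool" where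
  "simple_graph V E \<longleftrightarrow> finite V \<and>
     (\<forall>e\<in>E. \<exists>u v. u \<in> V \<and> v \<in> V \<and> u \<noteq> v \<and> e = {u, v})"

definition neighbours :: "'a set set \<Rightarrow> 'a \<Rightarrow> 'a set" where
  "neighbours E v = {u. {u, v} \<in> E}"

definition cubic :: "'a set \<Rightarrow> 'a set set \<Rightarrow> bool" where
  "cubic V E \<longleftrightarrow> simple_graph V E \<and> (\<forall>v\<in>V. card (neighbours E v) = 3)"

definition cut_edges :: "'a set set \<Rightarrow> 'a set \<Rightarrow> 'a set \<Rightarrow> 'a set set" where
  "cut_edges E X Y = {e \<in> E. \<exists>x\<in>X. \<exists>y\<in>Y. e = {x, y}}"

definition cutset :: "'a set \<Rightarrow> 'a set set \<Rightarrow> 'a set set \<Rightarrow> bool" where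
  "cutset V E M \<longleftrightarrow> (\<exists>X Y. X \<union> Y = V \<and> X \<inter> Y = {} \<and> X \<noteq> {} \<and> Y \<noteq> {}
       \<and> M = cut_edges E X Y)"

definition perfect_matching :: "'a set \<Rightarrow> 'a set set \<Rightarrow> 'a set set \<Rightarrow> bool" where
  "perfect_matching V E M \<longleftrightarrow> M \<subseteq> E \<and> (\<forall>v\<in>V. \<exists>!e. e \<in> M \<and> v \<in> e)"

definition perfect_matching_cut :: "'a set \<Rightarrow> 'a set set \<Rightarrow> 'a set set \<Rightarrow> bool" where
  "perfect_matching_cut V E M \<longleftrightarrow> perfect_matching V E M \<and> cutset V E M"

definition is_C4 :: "'a set \<Rightarrow> 'a set set \<Rightarrow> bool" where
  "is_C4 VC EC \<longleftrightarrow> (\<exists>a b c d. distinct [a, b, c, d] \<and> VC = {a, b, c, d}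
      \<and> EC = {{a, b}, {b, c}, {c, d}, {d, a}})"

definition induced_C4 :: "'a set \<Rightarrow> 'a set set \<Rightarrow> 'a set \<Rightarrow> 'a set set \<Rightarrow> bool" where
  "induced_C4 V E VC EC \<longleftrightarrow> VC \<subseteq> V \<and> EC = {e \<in> E. e \<subseteq> VC} \<and> is_C4 VC EC"

end

theory Submission
  imports Defs
begin

lemma c4_partner:
  assumes "distinct [a,b,c,d]"
    and "\<And>u v. {u,v} \<in> E \<Longrightarrow> ({u,v} \<in> M \<longleftrightarrow> (u \<in> X \<longleftrightarrow> v \<notin> X))"
    and "\<And>v u w. {v,u} \<in> M \<Longrightarrow> {v,w} \<in> M \<Longrightarrow> u = w"
    and "{a,b} \<in> E" "{b,c} \<in> E" "{c,d} \<in> E" "{d,a} \<in> E"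
    and "{{a,b},{b,c},{c,d},{d,a}} \<inter> M \<noteq> {}"
    and "x \<in> {a,b,c,d}"
  shows "\<exists>z\<in>{a,b,c,d}. {x,z} \<in> M"
proof -
  have ab: "{a,b} \<in> M \<longleftrightarrow> (a \<in> X \<longleftrightarrow> b \<notin> X)" using assms(2)[OF assms(4)] .
  have bc: "{b,c} \<in> M \<longleftrightarrow> (b \<in> X \<longleftrightarrow> c \<notin> X)" using assms(2)[OF assms(5)] .
  have cd: "{c,d} \<in> M \<longleftrightarrow> (c \<in> X \<longleftrightarrow> d \<notin> X)" using assms(2)[OF assms(6)] .
  have da: "{d,a} \<in> M \<longleftrightarrow> (d \<in> X \<longleftrightarrow> a \<notin> X)" using assms(2)[OF assms(7)] .
  have u1: "\<not> ({a,b} \<in> M \<and> {b,c} \<in> M)" using assms(1) assms(3)[of b a c] by (auto simp: insert_commute)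
  have u2: "\<not> ({b,c} \<in> M \<and> {c,d} \<in> M)" using assms(1) assms(3)[of c b d] by (auto simp: insert_commute)
  have u3: "\<not> ({c,d} \<in> M \<and> {d,a} \<in> M)" using assms(1) assms(3)[of d c a] by (auto simp: insert_commute)
  have u4: "\<not> ({d,a} \<in> M \<and> {a,b} \<in> M)" using assms(1) assms(3)[of a d b] by (auto simp: insert_commute)
  have "({a,b} \<in> M \<and> {c,d} \<in> M) \<or> ({b,c} \<in> M \<and> {d,a} \<in> M)"
    using ab bc cd da u1 u2 u3 u4 assms(8) by blast
  then show ?thesis using assms(9) by (auto simp: insert_commute)
qed

lemma c4_nbrs:
  assumes "induced_C4 V E VC EC" "y \<in> VC"
  shows "\<exists>p q. p \<noteq> q \<and> p \<in> VC \<and> q \<in> VC \<and> {y,p} \<in> EC \<and> {y,q} \<in> EC"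
proof -
  obtain a b c d where d: "distinct [a,b,c,d]" "VC = {a,b,c,d}"
    and ec: "EC = {{a, b}, {b, c}, {c, d}, {d, a}}"
    using assms(1) unfolding induced_C4_def is_C4_def by blast
  have "y = a \<or> y = b \<or> y = c \<or> y = d" using assms(2) d by auto
  then show ?thesis
  proof (elim disjE)
    assume "y = a" then have "b \<noteq> d \<and> b \<in> VC \<and> d \<in> VC \<and> {y,b} \<in> EC \<and> {y,d} \<in> EC" using d ec by (simp add: insert_commute)
    then show ?thesis by blast
  next
    assume "y = b" then have "a \<noteq> c \<and> a \<in> VC \<and> c \<in> VC \<and> {y,a} \<in> EC \<and> {y,c} \<in> EC" using d ec by (simp add: insert_commute)
    then show ?thesis by blast
  next
    assume "y = c" then have "b \<noteq> d \<and> b \<in> VC \<and> d \<in> VC \<and> {y,b} \<in> EC \<and> {y,d} \<in> EC" using d ec by (simp add: insert_commute)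
    then show ?thesis by blast
  next
    assume "y = d" then have "a \<noteq> c \<and> a \<in> VC \<and> c \<in> VC \<and> {y,a} \<in> EC \<and> {y,c} \<in> EC" using d ec by (simp add: insert_commute)
    then show ?thesis by blast
  qed
qed

lemma one_dir:
  fixes V :: "'a set" and E M :: "'a set set"
    and VC1 VC2 :: "'a set" and EC1 EC2 :: "'a set set"
  assumes cub: "cubic V E"
    and pmc: "perfect_matching_cut V E M"
    and i1: "induced_C4 V E VC1 EC1"
    and i2: "induced_C4 V E VC2 EC2"
    and disj: "VC1 \<inter> VC2 = {}"
    and x: "x \<in> VC1" and y: "y \<in> VC2" and xy: "{x, y} \<in> E"
    and n1: "EC1 \<inter> M \<noteq> {}" and n2: "EC2 \<inter> M = {}"
  shows False
proof -
  have sg: "simple_graph V E" using cub by (simp add: cubic_def)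
  have inV: "\<And>u v. {u,v} \<in> E \<Longrightarrow> u \<in> V \<and> v \<in> V \<and> u \<noteq> v"
  proof -
    fix u v assume "{u,v} \<in> E"
    then obtain p q where "p \<in> V" "q \<in> V" "p \<noteq> q" "{u,v} = {p,q}"
      using sg unfolding simple_graph_def by blast
    then show "u \<in> V \<and> v \<in> V \<and> u \<noteq> v" by (auto simp: doubleton_eq_iff)
  qed
  obtain X Y where XY: "X \<union> Y = V" "X \<inter> Y = {}" "M = cut_edges E X Y"
    using pmc unfolding perfect_matching_cut_def cutset_def by blast
  have pm: "M \<subseteq> E" "\<forall>v\<in>V. \<exists>!e. e \<in> M \<and> v \<in> e"
    using pmc unfolding perfect_matching_cut_def perfect_matching_def by auto
  have F1: "{u,v} \<in> M \<longleftrightarrow> (u \<in> X \<longleftrightarrow> v \<notin> X)" if "{u,v} \<in> E" for u v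
  proof -
    have "u \<in> V" "v \<in> V" using inV[OF that] by auto
    then show ?thesis using that XY unfolding cut_edges_def
      by (auto simp: doubleton_eq_iff)
  qed
  have F2: "u = w" if "{v,u} \<in> M" "{v,w} \<in> M" for v u w
  proof -
    have "v \<in> V" using inV that pm(1) by blast
    then have "\<exists>!e. e \<in> M \<and> v \<in> e" using pm(2) by simp
    then have "{v,u} = {v,w}" using that by (metis insertI1)
    then show ?thesis by (auto simp: doubleton_eq_iff)
  qed
  have F3: "\<exists>u. {v,u} \<in> M" if "v \<in> V" for v
  proof -
    have "\<exists>!e. e \<in> M \<and> v \<in> e" using pm(2) that by simp
    then obtain e where e: "e \<in> M" "v \<in> e" by (meson ex1_implies_ex)
    then have "e \<in> E" using pm(1) by blast
    then obtain p q where pq: "e = {p,q}" using sg unfolding simple_graph_def by blast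
    show ?thesis
    proof (cases "v = p")
      case True then show ?thesis using e pq by blast
    next
      case False then have "v = q" using e pq by blast
      then have "{v,p} \<in> M" using e pq by (simp add: insert_commute)
      then show ?thesis by blast
    qed
  qed
  obtain a b c d where d1: "distinct [a,b,c,d]" "VC1 = {a,b,c,d}"
    and ec1: "EC1 = {{a, b}, {b, c}, {c, d}, {d, a}}"
    using i1 unfolding induced_C4_def is_C4_def by blast
  have ec1E: "EC1 \<subseteq> E" using i1 unfolding induced_C4_def by auto
  obtain z where z: "z \<in> VC1" "{x,z} \<in> M"
  proof -
    have e4: "{a,b} \<in> E" "{b,c} \<in> E" "{c,d} \<in> E" "{d,a} \<in> E" using ec1E ec1 by auto
    have n1': "{{a,b},{b,c},{c,d},{d,a}} \<inter> M \<noteq> {}" using n1 ec1 by simp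
    have xin: "x \<in> {a,b,c,d}" using x d1(2) by simp
    have F1': "\<And>u v. {u,v} \<in> E \<Longrightarrow> ({u,v} \<in> M \<longleftrightarrow> (u \<in> X \<longleftrightarrow> v \<notin> X))" by (rule F1)
    have F2': "\<And>v u w. {v,u} \<in> M \<Longrightarrow> {v,w} \<in> M \<Longrightarrow> u = w" by (rule F2)
    have "\<exists>z\<in>{a,b,c,d}. {x,z} \<in> M"
      by (rule c4_partner[OF d1(1) F1' F2' e4 n1' xin])
    then show ?thesis using that d1(2) by blast
  qed
  have yV: "y \<in> V" using inV xy by blast
  obtain w where w: "{y,w} \<in> M" using F3 yV by blast
  have wE: "{y,w} \<in> E" using w pm(1) by blast
  have wn: "w \<notin> VC2"
  proof
    assume "w \<in> VC2"
    then have "{y,w} \<in> EC2" using i2 y wE unfolding induced_C4_def by auto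
    then show False using n2 w by blast
  qed
  obtain p q where pq: "p \<noteq> q" "p \<in> VC2" "q \<in> VC2" "{y,p} \<in> EC2" "{y,q} \<in> EC2"
    using c4_nbrs[OF i2 y] by blast
  have ec2E: "EC2 \<subseteq> E" using i2 unfolding induced_C4_def by auto
  have fin: "finite (neighbours E y)" and c3: "card (neighbours E y) = 3"
    using cub yV unfolding cubic_def by (auto intro: card_ge_0_finite)
  have "w = x"
  proof (rule ccontr)
    assume "w \<noteq> x"
    have sub: "{p,q,x,w} \<subseteq> neighbours E y" unfolding neighbours_def
      using pq ec2E xy wE by (auto simp: insert_commute)
    have "x \<notin> VC2" using x disj by blast
    then have ne: "p \<noteq> x" "p \<noteq> w" "q \<noteq> x" "q \<noteq> w" using pq wn by auto
    have "card {p,q,x,w} = 4" using ne pq(1) \<open>w \<noteq> x\<close> by simp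
    then show False using card_mono[OF fin sub] c3 by simp
  qed
  then have "{x,y} \<in> M" using w by (simp add: insert_commute)
  then have "y = z" using F2 z(2) by blast
  then show False using z(1) y disj by blast
qed

theorem corollary4:
  fixes V :: "'a set" and E M :: "'a set set"
    and VC1 VC2 :: "'a set" and EC1 EC2 :: "'a set set"
  assumes "cubic V E"
    and "perfect_matching_cut V E M"
    and "induced_C4 V E VC1 EC1"
    and "induced_C4 V E VC2 EC2"
    and "VC1 \<inter> VC2 = {}"
    and "\<exists>x\<in>VC1. \<exists>y\<in>VC2. {x, y} \<in> E"
  shows "EC1 \<inter> M \<noteq> {} \<longleftrightarrow> EC2 \<inter> M \<noteq> {}"
proof -
  obtain x y where xy: "x \<in> VC1" "y \<in> VC2" "{x,y} \<in> E" using assms(6) by blast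
  have yx: "{y,x} \<in> E" using xy(3) by (simp add: insert_commute)
  have d: "VC2 \<inter> VC1 = {}" using assms(5) by blast
  show ?thesis
    using one_dir[OF assms(1,2,3,4,5) xy] one_dir[OF assms(1,2,4,3) d xy(2,1) yx] by blast
qed

end
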